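(* Let $P'$ be a finite totally ordered subset of $\mathbb{Q}$ with minimum $0$ and maximum $n$ that contains $\{0,1,\dots,n\}$, and let $L'=P'\times P'$, $L_n=\{0,\dots,n\}^2$ (product orders). Let $g:L_n\to L'$ be the inclusion and $f:L'\to L_n$, $f(a_1,a_2)=(\lceil a_1\rceil,\lceil a_2\rceil)$. Let $F:L'\to\Delta K$ and $G:L_n\to\Delta K$ be filtrations with $G=F\circ g$. Then for any $x\le y$ in $L_n$ and every dimension $q$, \[\mathsf{Dgm}_qG[x,y]=\sum_{[a,b]\in\mathsf{Int}\,L',\ f(a)=x,\ f(b)=y}\mathsf{Dgm}_qF[a,b].\]
   Context: $K$ is a finite simplicial complex, coefficients in a field; $\Delta K$ is the poset of subcomplexes of $K$. For a finite poset $P$ with least element $\bot$ and greatest $\top$: $\mathsf{Int}\,P=\{[a,b]:a\le b\}$ with $[a,b]\le[c,d]$ iff $a\le c$, $b\le d$; a $P$-filtration is a monotone map $F:P\to\Delta K$ with $F(\bot)=\emptyset$, $F(\top)=K$; $ZB_qF[a,b]=\dim(Z_qF(a)\cap B_qF(b))$ for $b\ne\top$ and $\dim Z_qF(a)$ for $b=\top$ ($Z_q,B_q$ = $q$-cycles, $q$-boundaries); $\mathsf{Dgm}_qF$ is the unique function on $\mathsf{Int}\,P$ with $ZB_qF[c,d]=\sum_{[a,b]\le[c,d]}\mathsf{Dgm}_qF[a,b]$. *)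

theory Defs
  imports Complex_Main "HOL-Library.Function_Algebras"
begin

text \<open>Vertices carry a linear order,
used only to orient simplices.\<close>

definition simplicial_complex :: "'v set set \<Rightarrow> bool" where
  "simplicial_complex K \<longleftrightarrow> finite K \<and>
     (\<forall>\<sigma>\<in>K. finite \<sigma> \<and> \<sigma> \<noteq> {}) \<and>
     (\<forall>\<sigma>\<in>K. \<forall>\<tau>. \<tau> \<subseteq> \<sigma> \<and> \<tau> \<noteq> {} \<longrightarrow> \<tau> \<in> K)"

definition subcomplex :: "'v set set \<Rightarrow> 'v set set \<Rightarrow> bool" where
  "subcomplex K L \<longleftrightarrow> L \<subseteq> K \<and> (\<forall>\<sigma>\<in>L. \<forall>\<tau>. \<tau> \<subseteq> \<sigma> \<and> \<tau> \<noteq> {} \<longrightarrow> \<tau> \<in> L)"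

definition chains :: "'v set set \<Rightarrow> nat \<Rightarrow> ('v set \<Rightarrow> 'k::field) set" where
  "chains L q = {c. \<forall>\<sigma>. c \<sigma> \<noteq> 0 \<longrightarrow> \<sigma> \<in> L \<and> card \<sigma> = Suc q}"

text \<open>Orientation sign of the face \<sigma> - {w}: (-1)^i where w is the i-th vertex of \<sigma>
(counted from 0 in increasing order).\<close>
definition face_sign :: "'v::linorder set \<Rightarrow> 'v set \<Rightarrow> 'k::field" where
  "face_sign \<sigma> \<tau> = (-1) ^ card {v\<in>\<sigma>. v < the_elem (\<sigma> - \<tau>)}"

text \<open>Simplicial boundary operator of K (non-augmented: boundary of a vertex is 0).\<close>
definition bdry :: "'v::linorder set set \<Rightarrow> ('v set \<Rightarrow> 'k::field) \<Rightarrow> ('v set \<Rightarrow> 'k)" where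
  "bdry K c = (\<lambda>\<tau>. if \<tau> \<in> K then
      (\<Sum>\<sigma>\<in>{\<sigma>\<in>K. \<tau> \<subseteq> \<sigma> \<and> card \<sigma> = Suc (card \<tau>)}. face_sign \<sigma> \<tau> * c \<sigma>)
     else 0)"

definition cycles :: "'v::linorder set set \<Rightarrow> 'v set set \<Rightarrow> nat \<Rightarrow> ('v set \<Rightarrow> 'k::field) set" where
  "cycles K L q = {c \<in> chains L q. bdry K c = 0}"

definition boundaries :: "'v::linorder set set \<Rightarrow> 'v set set \<Rightarrow> nat \<Rightarrow> ('v set \<Rightarrow> 'k::field) set" where
  "boundaries K L q = bdry K ` chains L (Suc q)"

definition chain_dim :: "'k::field itself \<Rightarrow> ('v set \<Rightarrow> 'k) set \<Rightarrow> nat" where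
  "chain_dim T V = vector_space.dim (\<lambda>(a::'k) (c::'v set \<Rightarrow> 'k) x. a * c x) V"

definition intervals :: "'p set \<Rightarrow> ('p \<Rightarrow> 'p \<Rightarrow> bool) \<Rightarrow> ('p \<times> 'p) set" where
  "intervals P le = {(a, b). a \<in> P \<and> b \<in> P \<and> le a b}"

definition filtration ::
  "'p set \<Rightarrow> ('p \<Rightarrow> 'p \<Rightarrow> bool) \<Rightarrow> 'p \<Rightarrow> 'p \<Rightarrow> 'v set set \<Rightarrow> ('p \<Rightarrow> 'v set set) \<Rightarrow> bool" where
  "filtration P le bt tp K F \<longleftrightarrow>
     (\<forall>a\<in>P. subcomplex K (F a)) \<and>
     (\<forall>a\<in>P. \<forall>b\<in>P. le a b \<longrightarrow> F a \<subseteq> F b) \<and>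
     F bt = {} \<and> F tp = K"

definition ZB :: "'k::field itself \<Rightarrow> 'p \<Rightarrow> 'v::linorder set set \<Rightarrow> ('p \<Rightarrow> 'v set set)
    \<Rightarrow> nat \<Rightarrow> 'p \<times> 'p \<Rightarrow> nat" where
  "ZB T tp K F q ab =
     (if snd ab = tp then chain_dim T (cycles K (F (fst ab)) q :: ('v set \<Rightarrow> 'k) set)
      else chain_dim T (cycles K (F (fst ab)) q \<inter> boundaries K (F (snd ab)) q :: ('v set \<Rightarrow> 'k) set))"

definition Dgm :: "'k::field itself \<Rightarrow> 'p set \<Rightarrow> ('p \<Rightarrow> 'p \<Rightarrow> bool) \<Rightarrow> 'p
    \<Rightarrow> 'v::linorder set set \<Rightarrow> ('p \<Rightarrow> 'v set set) \<Rightarrow> nat \<Rightarrow> 'p \<times> 'p \<Rightarrow> int" where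
  "Dgm T P le tp K F q = (THE m.
     (\<forall>cd\<in>intervals P le. int (ZB T tp K F q cd) =
        (\<Sum>ab\<in>{ab\<in>intervals P le. le (fst ab) (fst cd) \<and> le (snd ab) (snd cd)}. m ab)) \<and>
     (\<forall>ab. ab \<notin> intervals P le \<longrightarrow> m ab = 0))"

definition pair_le :: "('a::order \<times> 'a) \<Rightarrow> ('a \<times> 'a) \<Rightarrow> bool" where
  "pair_le x y \<longleftrightarrow> fst x \<le> fst y \<and> snd x \<le> snd y"

end

theory Submission
  imports Defs "HOL-Library.Product_Order"
begin

lemma mobius_unique0:
  fixes S :: "'a::order set" and d :: "'a \<Rightarrow> int"
  assumes "finite S"
  shows "(\<forall>c\<in>S. (\<Sum>a\<in>{a\<in>S. a \<le> c}. d a) = 0) \<longrightarrow> (\<forall>a\<in>S. d a = 0)"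
  using assms
proof (induction S arbitrary: d rule: finite_remove_induct)
  case empty
  then show ?case by simp
next
  case (remove A)
  show ?case
  proof
    assume H: "\<forall>c\<in>A. (\<Sum>a\<in>{a\<in>A. a \<le> c}. d a) = 0"
    obtain t where t: "t \<in> A" "\<forall>b\<in>A. t \<le> b \<longrightarrow> t = b"
      using finite_has_maximal[OF remove(1,2)] by blast
    have eq: "{a\<in>A. a \<le> c} = {a\<in>A-{t}. a \<le> c}" if "c \<in> A - {t}" for c
      using that t by auto
    have "\<forall>c\<in>A-{t}. (\<Sum>a\<in>{a\<in>A-{t}. a \<le> c}. d a) = 0"
    proof
      fix c assume "c \<in> A - {t}"
      then have "(\<Sum>a\<in>{a\<in>A-{t}. a \<le> c}. d a) = (\<Sum>a\<in>{a\<in>A. a \<le> c}. d a)"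
        by (simp only: eq)
      then show "(\<Sum>a\<in>{a\<in>A-{t}. a \<le> c}. d a) = 0" using H \<open>c \<in> A - {t}\<close> by simp
    qed
    then have z: "\<forall>a\<in>A-{t}. d a = 0" using remove(4)[OF t(1)] by blast
    have "{a\<in>A. a \<le> t} = insert t {a\<in>A-{t}. a \<le> t}" using t by auto
    then have "(\<Sum>a\<in>{a\<in>A. a \<le> t}. d a) = d t + (\<Sum>a\<in>{a\<in>A-{t}. a \<le> t}. d a)"
      using remove(1) by simp
    also have "(\<Sum>a\<in>{a\<in>A-{t}. a \<le> t}. d a) = 0" using z by simp
    finally have "d t = 0" using H t by simp
    then show "\<forall>a\<in>A. d a = 0" using z by blast
  qed
qed

lemma mobius_exists:
  fixes S :: "'a::order set" and Z :: "'a \<Rightarrow> int"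
  assumes "finite S"
  shows "\<exists>m. (\<forall>c\<in>S. Z c = (\<Sum>a\<in>{a\<in>S. a \<le> c}. m a)) \<and> (\<forall>a. a \<notin> S \<longrightarrow> m a = 0)"
  using assms
proof (induction S rule: finite_remove_induct)
  case empty
  then show ?case by (intro exI[of _ "\<lambda>_. 0"]) simp
next
  case (remove A)
  obtain t where t: "t \<in> A" "\<forall>b\<in>A. t \<le> b \<longrightarrow> t = b"
    using finite_has_maximal[OF remove(1,2)] by blast
  obtain m' where m': "\<forall>c\<in>A-{t}. Z c = (\<Sum>a\<in>{a\<in>A-{t}. a \<le> c}. m' a)"
    "\<forall>a. a \<notin> A-{t} \<longrightarrow> m' a = 0"
    using remove(4)[OF t(1)] by blast
  define m where "m = m'(t := Z t - (\<Sum>a\<in>{a\<in>A-{t}. a \<le> t}. m' a))"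
  have "\<forall>c\<in>A. Z c = (\<Sum>a\<in>{a\<in>A. a \<le> c}. m a)"
  proof
    fix c assume c: "c \<in> A"
    show "Z c = (\<Sum>a\<in>{a\<in>A. a \<le> c}. m a)"
    proof (cases "c = t")
      case True
      have "{a\<in>A. a \<le> t} = insert t {a\<in>A-{t}. a \<le> t}" using t by auto
      then have "(\<Sum>a\<in>{a\<in>A. a \<le> t}. m a) = m t + (\<Sum>a\<in>{a\<in>A-{t}. a \<le> t}. m a)"
        using remove(1) by simp
      also have "(\<Sum>a\<in>{a\<in>A-{t}. a \<le> t}. m a) = (\<Sum>a\<in>{a\<in>A-{t}. a \<le> t}. m' a)"
        by (rule sum.cong) (auto simp: m_def)
      finally show ?thesis using True by (simp add: m_def)
    next
      case False
      have eq: "{a\<in>A. a \<le> c} = {a\<in>A-{t}. a \<le> c}" using c False t by auto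
      have "(\<Sum>a\<in>{a\<in>A-{t}. a \<le> c}. m a) = (\<Sum>a\<in>{a\<in>A-{t}. a \<le> c}. m' a)"
        by (rule sum.cong) (auto simp: m_def)
      then show ?thesis using eq m'(1) c False by simp
    qed
  qed
  moreover have "\<forall>a. a \<notin> A \<longrightarrow> m a = 0" using m'(2) t(1) by (auto simp: m_def)
  ultimately show ?case by blast
qed

lemma mobius_the:
  fixes S :: "'a::order set" and Z :: "'a \<Rightarrow> int"
  assumes "finite S"
    and "\<forall>c\<in>S. Z c = (\<Sum>a\<in>{a\<in>S. a \<le> c}. m a)" and "\<forall>a. a \<notin> S \<longrightarrow> m a = 0"
  shows "(THE m. (\<forall>c\<in>S. Z c = (\<Sum>a\<in>{a\<in>S. a \<le> c}. m a)) \<and> (\<forall>a. a \<notin> S \<longrightarrow> m a = 0)) = m"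
proof (rule the_equality)
  show "(\<forall>c\<in>S. Z c = (\<Sum>a\<in>{a\<in>S. a \<le> c}. m a)) \<and> (\<forall>a. a \<notin> S \<longrightarrow> m a = 0)"
    using assms by blast
next
  fix m2 assume H: "(\<forall>c\<in>S. Z c = (\<Sum>a\<in>{a\<in>S. a \<le> c}. m2 a)) \<and> (\<forall>a. a \<notin> S \<longrightarrow> m2 a = 0)"
  have "\<forall>c\<in>S. (\<Sum>a\<in>{a\<in>S. a \<le> c}. (m2 a - m a)) = 0"
    using H assms(2) by (simp add: sum_subtractf)
  then have "\<forall>a\<in>S. m2 a - m a = 0" using mobius_unique0[OF assms(1), of "\<lambda>a. m2 a - m a"] by blast
  then show "m2 = m" using H assms(3) by (metis eq_iff_diff_eq_0 ext)
qed


lemma pair_le_eq: "pair_le = (\<lambda>x y. x \<le> y)"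
  by (auto simp: fun_eq_iff pair_le_def less_eq_prod_def)

lemma Dgm_eq:
  fixes P :: "('a::order \<times> 'a) set"
  assumes "finite P"
    and "\<forall>cd\<in>intervals P pair_le. int (ZB T tp K F q cd) =
           (\<Sum>ab\<in>{ab\<in>intervals P pair_le. ab \<le> cd}. m ab)"
    and "\<forall>ab. ab \<notin> intervals P pair_le \<longrightarrow> m ab = 0"
  shows "Dgm T P pair_le tp K F q = m"
proof -
  have fin: "finite (intervals P pair_le)"
    by (rule finite_subset[of _ "P \<times> P"]) (auto simp: intervals_def assms(1))
  have seq: "{ab\<in>intervals P pair_le. pair_le (fst ab) (fst cd) \<and> pair_le (snd ab) (snd cd)}
      = {ab\<in>intervals P pair_le. ab \<le> cd}" for cd :: "('a \<times> 'a) \<times> ('a \<times> 'a)"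
    by (auto simp: pair_le_def less_eq_prod_def)
  show ?thesis
    unfolding Dgm_def seq
    by (rule mobius_the[OF fin, of "\<lambda>cd. int (ZB T tp K F q cd)"]) (use assms in auto)
qed

lemma Dgm_prop:
  fixes P :: "('a::order \<times> 'a) set"
  assumes "finite P"
  shows "\<forall>cd\<in>intervals P pair_le. int (ZB T tp K F q cd) =
           (\<Sum>ab\<in>{ab\<in>intervals P pair_le. ab \<le> cd}. Dgm T P pair_le tp K F q ab)"
proof -
  have fin: "finite (intervals P pair_le)"
    by (rule finite_subset[of _ "P \<times> P"]) (auto simp: intervals_def assms(1))
  obtain m where m: "\<forall>c\<in>intervals P pair_le. int (ZB T tp K F q c) =
      (\<Sum>a\<in>{a\<in>intervals P pair_le. a \<le> c}. m a)" "\<forall>a. a \<notin> intervals P pair_le \<longrightarrow> m a = 0"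
    using mobius_exists[OF fin, of "\<lambda>cd. int (ZB T tp K F q cd)"] by blast
  have "Dgm T P pair_le tp K F q = m" by (rule Dgm_eq[OF assms m])
  then show ?thesis using m(1) by simp
qed

lemma ceil_galois:
  fixes a :: rat and c :: nat
  assumes "0 \<le> a"
  shows "nat \<lceil>a\<rceil> \<le> c \<longleftrightarrow> a \<le> of_nat c"
proof -
  have "nat \<lceil>a\<rceil> \<le> c \<longleftrightarrow> \<lceil>a\<rceil> \<le> int c" using assms by linarith
  also have "\<dots> \<longleftrightarrow> a \<le> of_int (int c)" by (rule ceiling_le_iff)
  finally show ?thesis by simp
qed

theorem mainTheorem8:
  fixes P' :: "rat set" and n :: nat and K :: "'v::linorder set set"
    and F :: "rat \<times> rat \<Rightarrow> 'v set set" and G :: "nat \<times> nat \<Rightarrow> 'v set set"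
    and q :: nat and x y :: "nat \<times> nat"
  assumes "finite P'"
    and "0 \<in> P'" and "of_nat n \<in> P'" and "\<forall>a\<in>P'. 0 \<le> a \<and> a \<le> of_nat n"
    and "\<forall>i\<le>n. (of_nat i :: rat) \<in> P'"
    and "simplicial_complex K"
    and "filtration (P' \<times> P') pair_le (0, 0) (of_nat n, of_nat n) K F"
    and "filtration ({0..n} \<times> {0..n}) pair_le (0, 0) (n, n) K G"
    and "\<forall>z\<in>{0..n} \<times> {0..n}. G z = F (of_nat (fst z), of_nat (snd z))"
    and "x \<in> {0..n} \<times> {0..n}" and "y \<in> {0..n} \<times> {0..n}" and "pair_le x y"
  shows "Dgm TYPE('k::field) ({0..n} \<times> {0..n}) pair_le (n, n) K G q (x, y) =
    (\<Sum>ab\<in>{ab\<in>intervals (P' \<times> P') pair_le.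
              (nat \<lceil>fst (fst ab)\<rceil>, nat \<lceil>snd (fst ab)\<rceil>) = x \<and>
              (nat \<lceil>fst (snd ab)\<rceil>, nat \<lceil>snd (snd ab)\<rceil>) = y}.
       Dgm TYPE('k) (P' \<times> P') pair_le (of_nat n, of_nat n) K F q ab)"
proof -
  define f :: "rat \<times> rat \<Rightarrow> nat \<times> nat" where "f a = (nat \<lceil>fst a\<rceil>, nat \<lceil>snd a\<rceil>)" for a
  define g :: "nat \<times> nat \<Rightarrow> rat \<times> rat" where "g c = (of_nat (fst c), of_nat (snd c))" for c
  define ff where "ff ab = (f (fst ab), f (snd ab))" for ab
  define gg where "gg cd = (g (fst cd), g (snd cd))" for cd
  define I' where "I' = intervals (P' \<times> P') pair_le"
  define In where "In = intervals ({0..n} \<times> {0..n}) pair_le"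
  define DF where "DF = Dgm TYPE('k) (P' \<times> P') pair_le (of_nat n, of_nat n) K F q"
  define m where "m xy = (if xy \<in> In then
      (\<Sum>ab\<in>{ab\<in>I'. f (fst ab) = fst xy \<and> f (snd ab) = snd xy}. DF ab) else 0)" for xy
  have finP: "finite (P' \<times> P')" using assms(1) by simp
  have finI': "finite I'"
    unfolding I'_def by (rule finite_subset[of _ "(P' \<times> P') \<times> (P' \<times> P')"]) (auto simp: intervals_def assms(1))
  have finIn: "finite In"
    unfolding In_def by (rule finite_subset[of _ "({0..n} \<times> {0..n}) \<times> ({0..n} \<times> {0..n})"]) (auto simp: intervals_def)
  have DFp: "\<forall>cd\<in>I'. int (ZB TYPE('k) (of_nat n, of_nat n) K F q cd) =
           (\<Sum>ab\<in>{ab\<in>I'. ab \<le> cd}. DF ab)"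
    unfolding I'_def DF_def by (rule Dgm_prop[OF finP])
  have gal: "f a \<le> c \<longleftrightarrow> a \<le> g c" if "a \<in> P' \<times> P'" for a c
    using that assms(4) ceil_galois[of "fst a" "fst c"] ceil_galois[of "snd a" "snd c"]
    by (auto simp: f_def g_def less_eq_prod_def)
  have fin_grid: "f a \<in> {0..n} \<times> {0..n}" if "a \<in> P' \<times> P'" for a
  proof -
    have "f a \<le> (n, n)" using gal[OF that, of "(n,n)"] that assms(4)
      by (auto simp: g_def less_eq_prod_def)
    then show ?thesis by (cases "f a") (auto simp: less_eq_prod_def)
  qed
  have fmono: "f a \<le> f b" if "a \<le> b" for a b
    using that by (auto simp: f_def less_eq_prod_def intro!: nat_mono ceiling_mono)
  have ging: "g c \<in> P' \<times> P'" if "c \<in> {0..n} \<times> {0..n}" for c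
    using that assms(5) by (auto simp: g_def)
  have gmono: "g c \<le> g d" if "c \<le> d" for c d
    using that by (auto simp: g_def less_eq_prod_def)
  have ZBeq: "ZB TYPE('k) (n, n) K G q cd = ZB TYPE('k) (of_nat n, of_nat n) K F q (gg cd)"
    if "cd \<in> In" for cd
  proof -
    have c: "fst cd \<in> {0..n} \<times> {0..n}" "snd cd \<in> {0..n} \<times> {0..n}"
      using that by (auto simp: In_def intervals_def)
    have "G (fst cd) = F (g (fst cd))" "G (snd cd) = F (g (snd cd))"
      using assms(9) c by (auto simp: g_def)
    moreover have "(snd cd = (n, n)) \<longleftrightarrow> (g (snd cd) = (of_nat n, of_nat n))"
      by (cases "snd cd") (auto simp: g_def)
    ultimately show ?thesis by (simp add: ZB_def gg_def)
  qed
  have mprop: "\<forall>cd\<in>In. int (ZB TYPE('k) (n, n) K G q cd) =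
           (\<Sum>xy\<in>{xy\<in>In. xy \<le> cd}. m xy)"
  proof
    fix cd assume cd: "cd \<in> In"
    define S where "S = {ab\<in>I'. ff ab \<le> cd}"
    define T where "T = {xy\<in>In. xy \<le> cd}"
    have finS: "finite S" using finI' by (simp add: S_def)
    have finT: "finite T" using finIn by (simp add: T_def)
    have img: "ff ` S \<subseteq> T"
    proof
      fix xy assume "xy \<in> ff ` S"
      then obtain ab where ab: "ab \<in> I'" "ff ab \<le> cd" "xy = ff ab" by (auto simp: S_def)
      have "fst ab \<in> P' \<times> P'" "snd ab \<in> P' \<times> P'" "fst ab \<le> snd ab"
        using ab(1) by (auto simp: I'_def intervals_def pair_le_eq)
      then have "ff ab \<in> In" using fin_grid fmono by (auto simp: In_def intervals_def pair_le_eq ff_def)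
      then show "xy \<in> T" using ab by (simp add: T_def)
    qed
    have inner: "m xy = (\<Sum>ab\<in>{ab\<in>S. ff ab = xy}. DF ab)" if "xy \<in> T" for xy
    proof -
      have "{ab\<in>I'. f (fst ab) = fst xy \<and> f (snd ab) = snd xy} = {ab\<in>S. ff ab = xy}"
        using that by (auto simp: S_def T_def ff_def)
      then show ?thesis using that by (simp add: m_def T_def)
    qed
    have "(\<Sum>xy\<in>T. m xy) = (\<Sum>xy\<in>T. (\<Sum>ab\<in>{ab\<in>S. ff ab = xy}. DF ab))"
      using inner by (rule sum.cong[OF refl])
    also have "\<dots> = (\<Sum>ab\<in>S. DF ab)" by (rule sum.group[OF finS finT img])
    also have "S = {ab\<in>I'. ab \<le> gg cd}"
    proof -
      have "ff ab \<le> cd \<longleftrightarrow> ab \<le> gg cd" if "ab \<in> I'" for ab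
      proof -
        have "fst ab \<in> P' \<times> P'" "snd ab \<in> P' \<times> P'"
          using that by (auto simp: I'_def intervals_def)
        moreover have "ff ab \<le> cd \<longleftrightarrow> f (fst ab) \<le> fst cd \<and> f (snd ab) \<le> snd cd"
          unfolding ff_def by (simp only: less_eq_prod_def[of "(_, _)" cd] less_eq_prod_def[of ab "(_, _)"] fst_conv snd_conv)
        moreover have "ab \<le> gg cd \<longleftrightarrow> fst ab \<le> g (fst cd) \<and> snd ab \<le> g (snd cd)"
          unfolding gg_def by (simp only: less_eq_prod_def[of "(_, _)" cd] less_eq_prod_def[of ab "(_, _)"] fst_conv snd_conv)
        ultimately show ?thesis using gal by metis
      qed
      then show ?thesis by (auto simp: S_def)
    qed
    also have "(\<Sum>ab\<in>{ab\<in>I'. ab \<le> gg cd}. DF ab) = int (ZB TYPE('k) (of_nat n, of_nat n) K F q (gg cd))"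
    proof -
      have "gg cd \<in> I'" using cd ging gmono
        by (auto simp: gg_def I'_def In_def intervals_def pair_le_eq)
      then show ?thesis using DFp by simp
    qed
    finally show "int (ZB TYPE('k) (n, n) K G q cd) = (\<Sum>xy\<in>{xy\<in>In. xy \<le> cd}. m xy)"
      using ZBeq[OF cd] by (simp add: T_def)
  qed
  have "Dgm TYPE('k) ({0..n} \<times> {0..n}) pair_le (n, n) K G q = m"
    by (rule Dgm_eq) (use mprop in \<open>auto simp: In_def m_def\<close>)
  moreover have "(x, y) \<in> In" using assms(10-12) by (simp add: In_def intervals_def)
  ultimately show ?thesis by (simp add: m_def I'_def DF_def f_def)
qed

end
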